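(* The map $(f_n)^\bullet\mapsto f_\mathcal U$, where $f_\mathcal U(t):=\lim_{n,\mathcal U}f_n(t)$, is a well-defined surjective $*$-homomorphism $A^{c\mathcal U}\to C_b(X)$ with kernel exactly $I$. Consequently it induces a $*$-isomorphism $\Phi:A^{c\mathcal U}/I\to C_b(X)$ satisfying $\Phi(q(\Delta(a)))=a$ for all $a\in A$. In particular the Gelfand spectrum of $A^{c\mathcal U}/I$ is the Stone–Čech compactification $\beta X$.
   Context: $X$ is a second countable, locally compact space with basepoint $o$ and a fixed compatible proper metric $d$; $B(r)$ is the closed ball of radius $r$ about $o$. $A=C_0(X)$ and $C_b(X)$ is the $\mathrm{C}^*$-algebra of bounded continuous complex functions on $X$. $\mathcal U$ is a nonprincipal ultrafilter on $\mathbb N$, and $A^\mathcal U=\ell^\infty(A)/\{(f_n):\lim_{n,\mathcal U}\|f_n\|=0\}$ is the ultrapower, with $(f_n)^\bullet$ the class of $(f_n)$. A sequence $(f_n)\in\ell^\infty(A)$ is $\mathcal U$-equicontinuous on bounded sets if for every $r,\epsilon>0$ there is $\delta>0$ such that for a set of $n$ belonging to $\mathcal U$, $|f_n(s)-f_n(t)|\le\epsilon$ for all $s,t\in B(r)$ with $d(s,t)<\delta$; $A^{c\mathcal U}$ is the $\mathrm{C}^*$-subalgebra of $A^\mathcal U$ of classes of such sequences. $I:=\{(f_n)^\bullet\in A^\mathcal U:\exists r_n\in\mathbb R \text{ with } \lim_{n,\mathcal U}r_n=+\infty \text{ and } f_n|_{B(r_n)}\equiv 0\}$, a closed ideal contained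 in $A^{c\mathcal U}$. $q:A^{c\mathcal U}\to A^{c\mathcal U}/I$ is the quotient map and $\Delta(a)=(a,a,\dots)^\bullet$. *)

theory Defs
  imports "HOL-Analysis.Analysis"
begin

definition nonprincipal_ultrafilter :: "nat filter \<Rightarrow> bool" where
  "nonprincipal_ultrafilter U \<longleftrightarrow>
     U \<noteq> bot \<and>
     (\<forall>P. eventually P U \<or> eventually (\<lambda>n. \<not> P n) U) \<and>
     (\<forall>m. \<not> eventually (\<lambda>n. n = m) U)"

text \<open>The space X is a type with a proper metric (class heine_borel: closed bounded sets are
compact), hence locally compact and second countable. Closed ball B(r) = cball x0 r.\<close>

definition C0 :: "'a::metric_space \<Rightarrow> ('a \<Rightarrow> complex) set" where
  "C0 x0 = {f. continuous_on UNIV f \<and>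
              (\<forall>e>0. \<exists>r. \<forall>t. dist x0 t \<ge> r \<longrightarrow> cmod (f t) < e)}"

definition Cb :: "('a::metric_space \<Rightarrow> complex) set" where
  "Cb = {f. continuous_on UNIV f \<and> bounded (range f)}"

definition supnorm :: "('a \<Rightarrow> complex) \<Rightarrow> real" where
  "supnorm f = (SUP t. cmod (f t))"

definition linf_seq :: "'a::metric_space \<Rightarrow> (nat \<Rightarrow> 'a \<Rightarrow> complex) \<Rightarrow> bool" where
  "linf_seq x0 f \<longleftrightarrow> (\<forall>n. f n \<in> C0 x0) \<and> (\<exists>M. \<forall>n t. cmod (f n t) \<le> M)"

text \<open>Two representatives define the same class of A^U: lim_{n,U} ||f_n - g_n|| = 0.\<close>
definition U_equiv :: "nat filter \<Rightarrow> (nat \<Rightarrow> 'a \<Rightarrow> complex) \<Rightarrow> (nat \<Rightarrow> 'a \<Rightarrow> complex) \<Rightarrow> bool" where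
  "U_equiv U f g \<longleftrightarrow> ((\<lambda>n. supnorm (\<lambda>t. f n t - g n t)) \<longlongrightarrow> 0) U"

definition U_equicont :: "nat filter \<Rightarrow> 'a::metric_space \<Rightarrow> (nat \<Rightarrow> 'a \<Rightarrow> complex) \<Rightarrow> bool" where
  "U_equicont U x0 f \<longleftrightarrow>
     (\<forall>r>0. \<forall>\<epsilon>>0. \<exists>\<delta>>0. eventually (\<lambda>n. \<forall>s\<in>cball x0 r. \<forall>t\<in>cball x0 r.
         dist s t < \<delta> \<longrightarrow> cmod (f n s - f n t) \<le> \<epsilon>) U)"

text \<open>Representatives of classes in A^{cU}: sequences in l^\<infinity>(A) whose class contains a
U-equicontinuous representative.\<close>
definition AcU :: "nat filter \<Rightarrow> 'a::metric_space \<Rightarrow> (nat \<Rightarrow> 'a \<Rightarrow> complex) set" where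
  "AcU U x0 = {f. linf_seq x0 f \<and> (\<exists>g. linf_seq x0 g \<and> U_equicont U x0 g \<and> U_equiv U f g)}"

text \<open>Representatives of classes in the ideal I.\<close>
definition in_I :: "nat filter \<Rightarrow> 'a::metric_space \<Rightarrow> (nat \<Rightarrow> 'a \<Rightarrow> complex) \<Rightarrow> bool" where
  "in_I U x0 f \<longleftrightarrow> linf_seq x0 f \<and>
     (\<exists>g r. linf_seq x0 g \<and> U_equiv U f g \<and> filterlim r at_top U \<and>
            (\<forall>n. \<forall>t\<in>cball x0 (r n). g n t = 0))"

definition ulim :: "nat filter \<Rightarrow> (nat \<Rightarrow> 'a \<Rightarrow> complex) \<Rightarrow> 'a \<Rightarrow> complex" where
  "ulim U f = (\<lambda>t. Lim U (\<lambda>n. f n t))"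

end

theory Submission imports Defs begin


lemma np_nbot: "nonprincipal_ultrafilter U \<Longrightarrow> U \<noteq> bot"
  unfolding nonprincipal_ultrafilter_def by blast

lemma np_uf: "nonprincipal_ultrafilter U \<Longrightarrow> eventually P U \<or> eventually (\<lambda>n. \<not> P n) U"
  unfolding nonprincipal_ultrafilter_def by blast

lemma np_ge: assumes "nonprincipal_ultrafilter U" shows "eventually (\<lambda>n. n \<ge> N) U"
proof (induction N)
  case 0 then show ?case by simp
next
  case (Suc N)
  have "eventually (\<lambda>n. n \<noteq> N) U"
    using assms unfolding nonprincipal_ultrafilter_def by blast
  with Suc show ?case
    by eventually_elim auto
qed

lemma ultra_conv:
  fixes x :: "nat \<Rightarrow> complex"
  assumes np: "nonprincipal_ultrafilter U" and b: "\<forall>n. cmod (x n) \<le> M"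
  shows "\<exists>l. (x \<longlongrightarrow> l) U"
proof -
  have c: "compact (cball (0::complex) M)" by simp
  have "filtermap x U \<noteq> bot" using np_nbot[OF np] by (simp add: filtermap_bot_iff)
  moreover have "eventually (\<lambda>y. y \<in> cball 0 M) (filtermap x U)"
    using b by (simp add: eventually_filtermap)
  ultimately obtain l where l: "inf (nhds l) (filtermap x U) \<noteq> bot"
    using c unfolding compact_filter by blast
  have "(x \<longlongrightarrow> l) U"
    unfolding tendsto_def
  proof (intro allI impI)
    fix S assume S: "open S" "l \<in> S"
    show "eventually (\<lambda>n. x n \<in> S) U"
    proof (rule ccontr)
      assume "\<not> eventually (\<lambda>n. x n \<in> S) U"
      then have "eventually (\<lambda>n. x n \<notin> S) U" using np_uf[OF np, of "\<lambda>n. x n \<in> S"] by blast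
      then have e1: "eventually (\<lambda>y. y \<notin> S) (filtermap x U)" by (simp add: eventually_filtermap)
      have e2: "eventually (\<lambda>y. y \<in> S) (nhds l)" using S eventually_nhds by blast
      have "eventually (\<lambda>_. False) (inf (nhds l) (filtermap x U))"
        unfolding eventually_inf using e1 e2 by blast
      then show False using l by (simp add: eventually_False)
    qed
  qed
  then show ?thesis by blast
qed

lemma supnorm_ge: "(\<forall>t. cmod (f t) \<le> M) \<Longrightarrow> cmod (f t) \<le> supnorm f"
  unfolding supnorm_def by (rule cSUP_upper) (auto intro: bdd_aboveI2)

lemma supnorm_le: "(\<forall>t. cmod (f t) \<le> M) \<Longrightarrow> supnorm f \<le> M"
  unfolding supnorm_def by (rule cSUP_least) auto

lemma supnorm_nonneg: "(\<forall>t. cmod (f t) \<le> M) \<Longrightarrow> 0 \<le> supnorm f"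
  using supnorm_ge[of f M undefined] norm_ge_zero order_trans by blast

lemma linf_bdd: "linf_seq x0 f \<Longrightarrow> \<exists>M. \<forall>n t. cmod (f n t) \<le> M"
  unfolding linf_seq_def by blast

lemma equiv_pt:
  assumes "linf_seq x0 f" "linf_seq x0 g" "U_equiv U f g"
  shows "((\<lambda>n. f n t - g n t) \<longlongrightarrow> 0) U"
proof -
  obtain M1 where M1: "\<forall>n t. cmod (f n t) \<le> M1" using linf_bdd[OF assms(1)] by blast
  obtain M2 where M2: "\<forall>n t. cmod (g n t) \<le> M2" using linf_bdd[OF assms(2)] by blast
  have b: "\<forall>n t. cmod (f n t - g n t) \<le> M1 + M2"
  proof (intro allI)
    fix n t
    have "cmod (f n t - g n t) \<le> cmod (f n t) + cmod (g n t)" by (rule norm_triangle_ineq4)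
    then show "cmod (f n t - g n t) \<le> M1 + M2" using M1[rule_format, of n t] M2[rule_format, of n t] by linarith
  qed
  show ?thesis
  proof (rule Lim_null_comparison)
    show "eventually (\<lambda>n. norm (f n t - g n t) \<le> supnorm (\<lambda>t. f n t - g n t)) U"
    proof (intro always_eventually allI)
      fix n show "norm (f n t - g n t) \<le> supnorm (\<lambda>t. f n t - g n t)"
        using supnorm_ge[of "\<lambda>t. f n t - g n t" "M1+M2" t] b by blast
    qed
    show "((\<lambda>n. supnorm (\<lambda>t. f n t - g n t)) \<longlongrightarrow> 0) U"
      using assms(3) unfolding U_equiv_def .
  qed
qed

lemma ulim_eq: "nonprincipal_ultrafilter U \<Longrightarrow> ((\<lambda>n. f n t) \<longlongrightarrow> l) U \<Longrightarrow> ulim U f t = l"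
  unfolding ulim_def using tendsto_Lim np_nbot by blast

lemma conv_pt:
  assumes np: "nonprincipal_ultrafilter U" and b: "\<forall>n t. cmod (f n t) \<le> M"
  shows "((\<lambda>n. f n t) \<longlongrightarrow> ulim U f t) U"
proof -
  obtain l where l: "((\<lambda>n. f n t) \<longlongrightarrow> l) U" using ultra_conv[OF np, of "\<lambda>n. f n t" M] b by blast
  then show ?thesis using ulim_eq[where f=f and t=t, OF np l] by simp
qed

lemma conv_pt_linf: "nonprincipal_ultrafilter U \<Longrightarrow> linf_seq x0 f \<Longrightarrow> ((\<lambda>n. f n t) \<longlongrightarrow> ulim U f t) U"
  using conv_pt linf_bdd by metis

lemma equiv_ulim:
  assumes np: "nonprincipal_ultrafilter U" and "linf_seq x0 f" "linf_seq x0 g" "U_equiv U f g"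
  shows "ulim U f = ulim U g"
proof
  fix t
  have "((\<lambda>n. (f n t - g n t) + g n t) \<longlongrightarrow> 0 + ulim U g t) U"
    by (intro tendsto_add equiv_pt[OF assms(2-4)] conv_pt_linf[OF np assms(3)])
  then show "ulim U f t = ulim U g t" using ulim_eq[OF np] by simp
qed

lemma ulim_bdd:
  assumes np: "nonprincipal_ultrafilter U" and b: "\<forall>n t. cmod (f n t) \<le> M"
  shows "cmod (ulim U f t) \<le> M"
  by (rule tendsto_upperbound[OF tendsto_norm[OF conv_pt[OF np b]]]) (use b np_nbot[OF np] in auto)

lemma equicont_cont:
  assumes np: "nonprincipal_ultrafilter U" and l: "linf_seq x0 g" and e: "U_equicont U x0 g"
  shows "continuous_on UNIV (ulim U g)"
  unfolding continuous_on_iff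
proof (intro ballI allI impI)
  fix t :: 'a and ep :: real assume ep: "ep > 0"
  define r where "r = dist x0 t + 1"
  have r: "r > 0" unfolding r_def using zero_le_dist[of x0 t] by linarith
  obtain \<delta> where d: "\<delta> > 0" and ev: "eventually (\<lambda>n. \<forall>s\<in>cball x0 r. \<forall>t\<in>cball x0 r.
         dist s t < \<delta> \<longrightarrow> cmod (g n s - g n t) \<le> ep/2) U"
    using e r ep unfolding U_equicont_def by (meson half_gt_zero)
  show "\<exists>d>0. \<forall>x'\<in>UNIV. dist x' t < d \<longrightarrow> dist (ulim U g x') (ulim U g t) < ep"
  proof (intro exI[of _ "min \<delta> 1"] conjI ballI impI)
    show "min \<delta> 1 > 0" using d by simp
    fix s assume s: "dist s t < min \<delta> 1"
    have sd: "dist s t < \<delta>" "dist s t < 1" using s by auto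
    have tri: "dist x0 s \<le> dist x0 t + dist t s" by (rule dist_triangle)
    have sr: "s \<in> cball x0 r" "t \<in> cball x0 r" unfolding r_def mem_cball using tri sd(2)
      by (auto simp: dist_commute)
    have ev2: "eventually (\<lambda>n. cmod (g n s - g n t) \<le> ep/2) U"
      using ev by eventually_elim (use sr sd in blast)
    have "((\<lambda>n. cmod (g n s - g n t)) \<longlongrightarrow> cmod (ulim U g s - ulim U g t)) U"
      by (intro tendsto_norm tendsto_diff conv_pt_linf[OF np l])
    then have "cmod (ulim U g s - ulim U g t) \<le> ep/2"
      using tendsto_upperbound ev2 np_nbot[OF np] by blast
    then show "dist (ulim U g s) (ulim U g t) < ep" using ep by (simp add: dist_norm)
  qed
qed



lemma surj_part:
  fixes x0 :: "'a::heine_borel"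
  assumes np: "nonprincipal_ultrafilter U" and hC: "h \<in> Cb"
  shows "\<exists>f\<in>AcU U x0. ulim U f = h"
proof -
  have hc: "continuous_on UNIV h" using hC unfolding Cb_def by blast
  obtain M where hb: "\<forall>t. cmod (h t) \<le> M" using hC unfolding Cb_def bounded_iff by blast
  define \<phi> where "\<phi> n t = max 0 (min 1 (real n + 1 - dist x0 t))" for n t
  define f where "f n t = complex_of_real (\<phi> n t) * h t" for n t
  have \<phi>01: "0 \<le> \<phi> n t" "\<phi> n t \<le> 1" for n t unfolding \<phi>_def by auto
  have \<phi>1: "dist x0 t \<le> real n \<Longrightarrow> \<phi> n t = 1" for n t unfolding \<phi>_def by auto
  have \<phi>0: "dist x0 t \<ge> real n + 1 \<Longrightarrow> \<phi> n t = 0" for n t unfolding \<phi>_def by auto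
  have \<phi>c: "continuous_on UNIV (\<phi> n)" for n unfolding \<phi>_def by (intro continuous_intros)
  have fc: "continuous_on UNIV (f n)" for n unfolding f_def
    by (intro continuous_intros \<phi>c hc)
  have fb: "cmod (f n t) \<le> M" for n t
  proof -
    have "cmod (f n t) = \<phi> n t * cmod (h t)" by (simp add: f_def norm_mult \<phi>01 abs_of_nonneg)
    also have "\<dots> \<le> cmod (h t)" by (rule mult_left_le_one_le) (auto simp: \<phi>01)
    finally show ?thesis using hb by (meson order_trans)
  qed
  have fC0: "f n \<in> C0 x0" for n
    unfolding C0_def
  proof (intro CollectI conjI fc allI impI)
    fix e :: real assume "e > 0"
    then show "\<exists>r. \<forall>t. r \<le> dist x0 t \<longrightarrow> cmod (f n t) < e"
      by (intro exI[of _ "real n + 1"]) (auto simp: f_def \<phi>0)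
  qed
  have lf: "linf_seq x0 f" unfolding linf_seq_def using fC0 fb by blast
  have ef: "U_equicont U x0 f" unfolding U_equicont_def
  proof (intro allI impI)
    fix r \<epsilon> :: real assume r: "r > 0" and e: "\<epsilon> > 0"
    have "uniformly_continuous_on (cball x0 r) h"
      by (rule compact_uniformly_continuous[OF continuous_on_subset[OF hc] compact_cball]) auto
    then obtain d where d: "d > 0" and dd: "\<forall>x\<in>cball x0 r. \<forall>x'\<in>cball x0 r. dist x' x < d \<longrightarrow> dist (h x') (h x) < \<epsilon>"
      unfolding uniformly_continuous_on_def using e by blast
    have "eventually (\<lambda>n. \<forall>s\<in>cball x0 r. \<forall>t\<in>cball x0 r. dist s t < d \<longrightarrow> cmod (f n s - f n t) \<le> \<epsilon>) U"
      using np_ge[OF np, of "nat \<lceil>r\<rceil>"]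
    proof eventually_elim
      case (elim n)
      then have rn: "r \<le> real n" by linarith
      show ?case
      proof (intro ballI impI)
        fix s t assume s: "s \<in> cball x0 r" and t: "t \<in> cball x0 r" and st: "dist s t < d"
        have "f n s = h s" "f n t = h t" using s t rn by (auto simp: f_def \<phi>1)
        moreover have "dist (h s) (h t) < \<epsilon>" using dd s t st by blast
        ultimately show "cmod (f n s - f n t) \<le> \<epsilon>" by (simp add: dist_norm)
      qed
    qed
    then show "\<exists>\<delta>>0. eventually (\<lambda>n. \<forall>s\<in>cball x0 r. \<forall>t\<in>cball x0 r. dist s t < \<delta> \<longrightarrow> cmod (f n s - f n t) \<le> \<epsilon>) U"
      using d by blast
  qed
  have qf: "U_equiv U f f" unfolding U_equiv_def supnorm_def by simp
  have fA: "f \<in> AcU U x0" unfolding AcU_def using lf ef qf by blast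
  have "ulim U f t = h t" for t
  proof (rule ulim_eq[OF np], rule tendsto_eventually)
    show "eventually (\<lambda>n. f n t = h t) U"
      using np_ge[OF np, of "nat \<lceil>dist x0 t\<rceil>"]
    proof eventually_elim
      case (elim n)
      then have "dist x0 t \<le> real n" by linarith
      then have "\<phi> n t = 1" by (rule \<phi>1)
      then show ?case by (simp add: f_def)
    qed
  qed
  then show ?thesis using fA by blast
qed

lemma const_part:
  fixes x0 :: "'a::heine_borel"
  assumes np: "nonprincipal_ultrafilter U" and aC: "a \<in> C0 x0"
  shows "(\<lambda>n. a) \<in> AcU U x0 \<and> ulim U (\<lambda>n. a) = a"
proof -
  have ac: "continuous_on UNIV a" using aC unfolding C0_def by blast
  have "\<forall>e>0. \<exists>r. \<forall>t. r \<le> dist x0 t \<longrightarrow> cmod (a t) < e" using aC unfolding C0_def by blast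
  then obtain r where r: "\<forall>t. r \<le> dist x0 t \<longrightarrow> cmod (a t) < 1" using zero_less_one by blast
  have "compact (a ` cball x0 r)"
    by (rule compact_continuous_image[OF continuous_on_subset[OF ac] compact_cball]) auto
  then have "bounded (a ` cball x0 r)" by (rule compact_imp_bounded)
  then obtain B where B: "\<forall>y\<in>a ` cball x0 r. norm y \<le> B" unfolding bounded_iff by blast
  have ab: "cmod (a t) \<le> max 1 B" for t
  proof (cases "r \<le> dist x0 t")
    case True
    then have "cmod (a t) < 1" using r by blast
    then show ?thesis by (simp add: le_max_iff_disj)
  next
    case False
    then have "t \<in> cball x0 r" by simp
    then have "cmod (a t) \<le> B" using B by blast
    then show ?thesis by (simp add: le_max_iff_disj)
  qed
  have la: "linf_seq x0 (\<lambda>n. a)" unfolding linf_seq_def using aC ab by blast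
  have ea: "U_equicont U x0 (\<lambda>n. a)" unfolding U_equicont_def
  proof (intro allI impI)
    fix r \<epsilon> :: real assume r: "r > 0" and e: "\<epsilon> > 0"
    have "uniformly_continuous_on (cball x0 r) a"
      by (rule compact_uniformly_continuous[OF continuous_on_subset[OF ac] compact_cball]) auto
    then obtain d where d: "d > 0" and dd: "\<forall>x\<in>cball x0 r. \<forall>x'\<in>cball x0 r. dist x' x < d \<longrightarrow> dist (a x') (a x) < \<epsilon>"
      unfolding uniformly_continuous_on_def using e by blast
    have "\<forall>s\<in>cball x0 r. \<forall>t\<in>cball x0 r. dist s t < d \<longrightarrow> cmod (a s - a t) \<le> \<epsilon>"
    proof (intro ballI impI)
      fix s t assume s: "s \<in> cball x0 r" and t: "t \<in> cball x0 r" and st: "dist s t < d"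
      have "dist (a s) (a t) < \<epsilon>" using dd s t st by blast
      then show "cmod (a s - a t) \<le> \<epsilon>" by (simp add: dist_norm)
    qed
    then show "\<exists>\<delta>>0. eventually (\<lambda>n. \<forall>s\<in>cball x0 r. \<forall>t\<in>cball x0 r. dist s t < \<delta> \<longrightarrow> cmod (a s - a t) \<le> \<epsilon>) U"
      using d by (intro exI[of _ d]) simp
  qed
  have qa: "U_equiv U (\<lambda>n. a) (\<lambda>n. a)" unfolding U_equiv_def supnorm_def by simp
  have "(\<lambda>n. a) \<in> AcU U x0" unfolding AcU_def using la ea qa by blast
  moreover have "ulim U (\<lambda>n. a) = a"
    by (rule ext, rule ulim_eq[OF np], simp)
  ultimately show ?thesis by blast
qed



lemma ker_back:
  fixes x0 :: "'a::heine_borel"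
  assumes np: "nonprincipal_ultrafilter U" and I: "in_I U x0 f"
  shows "ulim U f = (\<lambda>t. 0)"
proof -
  obtain g r where lf: "linf_seq x0 f" and lg: "linf_seq x0 g" and q: "U_equiv U f g"
    and rt: "filterlim r at_top U" and g0: "\<forall>n. \<forall>t\<in>cball x0 (r n). g n t = 0"
    using I unfolding in_I_def by blast
  have "ulim U g t = 0" for t
  proof (rule ulim_eq[OF np], rule tendsto_eventually)
    have "eventually (\<lambda>n. dist x0 t \<le> r n) U" using rt unfolding filterlim_at_top by blast
    then show "eventually (\<lambda>n. g n t = 0) U" by eventually_elim (use g0 in auto)
  qed
  then show ?thesis using equiv_ulim[OF np lf lg q] by auto
qed

lemma ker_fwd:
  fixes x0 :: "'a::heine_borel"
  assumes np: "nonprincipal_ultrafilter U" and fA: "f \<in> AcU U x0" and f0: "ulim U f = (\<lambda>t. 0)"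
  shows "in_I U x0 f"
proof -
  obtain h where lf: "linf_seq x0 f" and lh: "linf_seq x0 h" and eh: "U_equicont U x0 h"
    and qh: "U_equiv U f h" using fA unfolding AcU_def by blast
  have uh: "ulim U h = (\<lambda>t. 0)" using equiv_ulim[OF np lf lh qh] f0 by simp
  have h0: "((\<lambda>n. h n t) \<longlongrightarrow> 0) U" for t using conv_pt_linf[OF np lh, of t] uh by simp
  obtain M where hM: "\<forall>n t. cmod (h n t) \<le> M" using linf_bdd[OF lh] by blast
  obtain Mf where fM: "\<forall>n t. cmod (f n t) \<le> Mf" using linf_bdd[OF lf] by blast
  have hC0: "h n \<in> C0 x0" for n using lh unfolding linf_seq_def by blast
  have stepA: "eventually (\<lambda>n. \<forall>t\<in>cball x0 R. cmod (h n t) \<le> \<epsilon>) U" if R: "R > 0" and e: "\<epsilon> > 0" for R \<epsilon>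
  proof -
    obtain \<delta> where d: "\<delta> > 0" and ev: "eventually (\<lambda>n. \<forall>s\<in>cball x0 R. \<forall>t\<in>cball x0 R.
         dist s t < \<delta> \<longrightarrow> cmod (h n s - h n t) \<le> \<epsilon>/2) U"
      using eh R e unfolding U_equicont_def by (meson half_gt_zero)
    have cov: "cball x0 R \<subseteq> (\<Union>c\<in>cball x0 R. ball c \<delta>)" using d by force
    obtain T where T: "T \<subseteq> cball x0 R" "finite T" "cball x0 R \<subseteq> (\<Union>c\<in>T. ball c \<delta>)"
      using compactE_image[OF compact_cball[of x0 R], of "cball x0 R" "\<lambda>c. ball c \<delta>"] cov by blast
    have evc: "\<forall>c\<in>T. eventually (\<lambda>n. cmod (h n c) \<le> \<epsilon>/2) U"
    proof
      fix c assume "c \<in> T"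
      have "eventually (\<lambda>n. dist (h n c) 0 < \<epsilon>/2) U" by (rule tendstoD[OF h0[of c]]) (use e in simp)
      then show "eventually (\<lambda>n. cmod (h n c) \<le> \<epsilon>/2) U" by eventually_elim simp
    qed
    have evT: "eventually (\<lambda>n. \<forall>c\<in>T. cmod (h n c) \<le> \<epsilon>/2) U"
      by (rule eventually_ball_finite[OF T(2) evc])
    show ?thesis using ev evT
    proof eventually_elim
      case (elim n)
      show ?case
      proof
        fix t assume t: "t \<in> cball x0 R"
        then obtain c where c: "c \<in> T" "t \<in> ball c \<delta>" using T(3) by blast
        have "dist t c < \<delta>" using c(2) by (simp add: dist_commute)
        then have "cmod (h n t - h n c) \<le> \<epsilon>/2" using elim(1) t c(1) T(1) by blast
        moreover have "cmod (h n c) \<le> \<epsilon>/2" using elim(2) c(1) by blast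
        moreover have "cmod (h n t) \<le> cmod (h n c) + cmod (h n t - h n c)"
          by (rule norm_triangle_sub)
        ultimately show "cmod (h n t) \<le> \<epsilon>" by linarith
      qed
    qed
  qed
  define P where "P n k \<longleftrightarrow> k \<le> n \<and> (\<forall>j\<le>k. \<forall>t\<in>cball x0 (real j + 1). cmod (h n t) \<le> 1 / (real j + 1))" for n k
  have evP: "eventually (\<lambda>n. P n K) U" for K
  proof -
    have "\<forall>j\<in>{..K}. eventually (\<lambda>n. \<forall>t\<in>cball x0 (real j + 1). cmod (h n t) \<le> 1 / (real j + 1)) U"
      by (intro ballI stepA) auto
    then have "eventually (\<lambda>n. \<forall>j\<in>{..K}. \<forall>t\<in>cball x0 (real j + 1). cmod (h n t) \<le> 1 / (real j + 1)) U"
      by (rule eventually_ball_finite[rotated]) simp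
    with np_ge[OF np, of K] show ?thesis unfolding P_def by eventually_elim auto
  qed
  define rr where "rr n = (if \<exists>k. P n k then Greatest (P n) else 0)" for n
  have Pb: "P n y \<Longrightarrow> y \<le> n" for n y unfolding P_def by simp
  have rr_ge: "P n K \<Longrightarrow> K \<le> rr n" for n K
    unfolding rr_def using Greatest_le_nat[of "P n" K n] Pb by auto
  have rr_P: "rr n > 0 \<Longrightarrow> P n (rr n)" for n
  proof -
    assume "rr n > 0"
    then have ex: "\<exists>k. P n k" unfolding rr_def by (cases "\<exists>k. P n k") auto
    then obtain k where "P n k" by blast
    then show "P n (rr n)" unfolding rr_def using ex GreatestI_nat[of "P n" k n] Pb by auto
  qed
  have rr_top: "eventually (\<lambda>n. K \<le> rr n) U" for K
    using evP[of K] by eventually_elim (rule rr_ge)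
  have rr_lim: "filterlim (\<lambda>n. real (rr n)) at_top U"
    unfolding filterlim_at_top
  proof
    fix Z :: real
    show "eventually (\<lambda>n. Z \<le> real (rr n)) U"
      using rr_top[of "nat \<lceil>Z\<rceil>"] by eventually_elim linarith
  qed
  define \<psi> where "\<psi> n t = max 0 (min 1 (real (rr n) - dist x0 t))" for n t
  define g where "g n t = h n t * (1 - complex_of_real (\<psi> n t))" for n t
  have \<psi>01: "0 \<le> \<psi> n t" "\<psi> n t \<le> 1" for n t unfolding \<psi>_def by auto
  have \<psi>1: "dist x0 t \<le> real (rr n) - 1 \<Longrightarrow> \<psi> n t = 1" for n t unfolding \<psi>_def by auto
  have \<psi>pos: "\<psi> n t \<noteq> 0 \<Longrightarrow> dist x0 t < real (rr n)" for n t unfolding \<psi>_def by auto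
  have \<psi>c: "continuous_on UNIV (\<psi> n)" for n unfolding \<psi>_def by (intro continuous_intros)
  have hg: "cmod (h n t - g n t) \<le> inverse (real (rr n))" for n t
  proof (cases "\<psi> n t = 0")
    case True then show ?thesis by (simp add: g_def)
  next
    case False
    then have dl: "dist x0 t < real (rr n)" by (rule \<psi>pos)
    then have rp: "rr n > 0" using zero_le_dist[of x0 t] by linarith
    then have Pr: "P n (rr n)" by (rule rr_P)
    have "real (rr n - 1) + 1 = real (rr n)" using rp by simp
    then have "cmod (h n t) \<le> 1 / real (rr n)" using Pr dl unfolding P_def
      by (metis diff_le_self less_imp_le mem_cball)
    moreover have "h n t - g n t = h n t * complex_of_real (\<psi> n t)" by (simp add: g_def algebra_simps)
    moreover have "cmod (h n t * complex_of_real (\<psi> n t)) = \<psi> n t * cmod (h n t)"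
      by (simp add: norm_mult \<psi>01 abs_of_nonneg)
    moreover have "\<psi> n t * cmod (h n t) \<le> cmod (h n t)"
      by (rule mult_left_le_one_le) (auto simp: \<psi>01)
    ultimately show ?thesis by (simp add: divide_inverse)
  qed
  have gh: "cmod (g n t) \<le> cmod (h n t)" for n t
  proof -
    have e1: "1 - complex_of_real (\<psi> n t) = complex_of_real (1 - \<psi> n t)" by simp
    have e2: "cmod (complex_of_real (1 - \<psi> n t)) = 1 - \<psi> n t"
      unfolding norm_of_real using \<psi>01(2)[of n t] by simp
    have "cmod (g n t) = (1 - \<psi> n t) * cmod (h n t)"
      unfolding g_def norm_mult e1 e2 by simp
    also have "\<dots> \<le> cmod (h n t)" by (rule mult_left_le_one_le) (auto simp: \<psi>01)
    finally show ?thesis .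
  qed
  have gC0: "g n \<in> C0 x0" for n
    unfolding C0_def
  proof (intro CollectI conjI allI impI)
    show "continuous_on UNIV (g n)" unfolding g_def
      using hC0[of n] unfolding C0_def by (auto intro!: continuous_intros \<psi>c)
    fix e :: real assume "e > 0"
    then obtain r where "\<forall>t. r \<le> dist x0 t \<longrightarrow> cmod (h n t) < e"
      using hC0[of n] unfolding C0_def by blast
    then show "\<exists>r. \<forall>t. r \<le> dist x0 t \<longrightarrow> cmod (g n t) < e"
      using gh by (meson le_less_trans)
  qed
  have lg: "linf_seq x0 g" unfolding linf_seq_def using gC0 gh hM by (meson order_trans)
  have qg: "U_equiv U f g" unfolding U_equiv_def
  proof (rule Lim_null_comparison)
    have pt: "cmod (f n t - g n t) \<le> supnorm (\<lambda>t. f n t - h n t) + inverse (real (rr n))" for n t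
    proof -
      have fhb: "\<forall>t. cmod (f n t - h n t) \<le> Mf + M"
        using fM hM by (smt (verit) norm_triangle_ineq4)
      have "cmod (f n t - g n t) \<le> cmod (f n t - h n t) + cmod (h n t - g n t)"
        using norm_triangle_ineq[of "f n t - h n t" "h n t - g n t"] by simp
      also have "\<dots> \<le> supnorm (\<lambda>t. f n t - h n t) + inverse (real (rr n))"
        using supnorm_ge[OF fhb, of t] hg[of n t] by simp
      finally show ?thesis .
    qed
    show "eventually (\<lambda>n. norm (supnorm (\<lambda>t. f n t - g n t)) \<le> supnorm (\<lambda>t. f n t - h n t) + inverse (real (rr n))) U"
    proof (intro always_eventually allI)
      fix n
      have "0 \<le> supnorm (\<lambda>t. f n t - g n t)" by (rule supnorm_nonneg[OF allI[OF pt]])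
      moreover have "supnorm (\<lambda>t. f n t - g n t) \<le> supnorm (\<lambda>t. f n t - h n t) + inverse (real (rr n))"
        by (rule supnorm_le[OF allI[OF pt]])
      ultimately show "norm (supnorm (\<lambda>t. f n t - g n t)) \<le> supnorm (\<lambda>t. f n t - h n t) + inverse (real (rr n))"
        by simp
    qed
    have "((\<lambda>n. supnorm (\<lambda>t. f n t - h n t) + inverse (real (rr n))) \<longlongrightarrow> 0 + 0) U"
      by (intro tendsto_add tendsto_inverse_0_at_top rr_lim qh[unfolded U_equiv_def])
    then show "((\<lambda>n. supnorm (\<lambda>t. f n t - h n t) + inverse (real (rr n))) \<longlongrightarrow> 0) U" by simp
  qed
  define r where "r n = real (rr n) - 1" for n
  have rt: "filterlim r at_top U"
    unfolding filterlim_at_top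
  proof
    fix Z :: real
    show "eventually (\<lambda>n. Z \<le> r n) U"
      using rr_top[of "nat \<lceil>Z + 1\<rceil>"] unfolding r_def by eventually_elim linarith
  qed
  have g0: "\<forall>n. \<forall>t\<in>cball x0 (r n). g n t = 0"
    unfolding r_def g_def using \<psi>1 by simp
  show ?thesis unfolding in_I_def using lf lg qg rt g0 by blast
qed



theorem mainTheorem5:
  fixes U :: "nat filter" and x0 :: "'a::heine_borel"
  assumes "nonprincipal_ultrafilter U"
  shows
    \<comment> \<open>f_U is the pointwise U-limit\<close>
    "(\<forall>f\<in>AcU U x0. \<forall>t. ((\<lambda>n. f n t) \<longlongrightarrow> ulim U f t) U)
     \<comment> \<open>well-defined on classes\<close>
     \<and> (\<forall>f\<in>AcU U x0. \<forall>g\<in>AcU U x0. U_equiv U f g \<longrightarrow> ulim U f = ulim U g)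
     \<comment> \<open>lands in C_b(X)\<close>
     \<and> (\<forall>f\<in>AcU U x0. ulim U f \<in> Cb)
     \<comment> \<open>*-homomorphism\<close>
     \<and> (\<forall>f\<in>AcU U x0. \<forall>g\<in>AcU U x0.
          ulim U (\<lambda>n t. f n t + g n t) = (\<lambda>t. ulim U f t + ulim U g t)
        \<and> ulim U (\<lambda>n t. f n t * g n t) = (\<lambda>t. ulim U f t * ulim U g t))
     \<and> (\<forall>f\<in>AcU U x0. \<forall>c. ulim U (\<lambda>n t. c * f n t) = (\<lambda>t. c * ulim U f t))
     \<and> (\<forall>f\<in>AcU U x0. ulim U (\<lambda>n t. cnj (f n t)) = (\<lambda>t. cnj (ulim U f t)))
     \<comment> \<open>surjective onto C_b(X)\<close>
     \<and> (\<forall>h\<in>Cb. \<exists>f\<in>AcU U x0. ulim U f = h)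
     \<comment> \<open>kernel is exactly I\<close>
     \<and> (\<forall>f\<in>AcU U x0. ulim U f = (\<lambda>t. 0) \<longleftrightarrow> in_I U x0 f)
     \<comment> \<open>Phi(q(Delta a)) = a\<close>
     \<and> (\<forall>a\<in>C0 x0. (\<lambda>n. a) \<in> AcU U x0 \<and> ulim U (\<lambda>n. a) = a)"
proof -
  note np = assms
  have lA: "f \<in> AcU U x0 \<Longrightarrow> linf_seq x0 f" for f unfolding AcU_def by blast
  have c1: "\<forall>f\<in>AcU U x0. \<forall>t. ((\<lambda>n. f n t) \<longlongrightarrow> ulim U f t) U"
    using conv_pt_linf[OF np] lA by blast
  have c2: "\<forall>f\<in>AcU U x0. \<forall>g\<in>AcU U x0. U_equiv U f g \<longrightarrow> ulim U f = ulim U g"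
    using equiv_ulim[OF np] lA by blast
  have c3: "\<forall>f\<in>AcU U x0. ulim U f \<in> Cb"
  proof
    fix f assume fA: "f \<in> AcU U x0"
    obtain g where lf: "linf_seq x0 f" and lg: "linf_seq x0 g" and eg: "U_equicont U x0 g"
      and q: "U_equiv U f g" using fA unfolding AcU_def by blast
    obtain M where M: "\<forall>n t. cmod (f n t) \<le> M" using linf_bdd[OF lf] by blast
    have "continuous_on UNIV (ulim U f)"
      using equiv_ulim[OF np lf lg q] equicont_cont[OF np lg eg] by simp
    moreover have "bounded (range (ulim U f))"
      unfolding bounded_iff using ulim_bdd[OF np M] by blast
    ultimately show "ulim U f \<in> Cb" unfolding Cb_def by blast
  qed
  have c4: "\<forall>f\<in>AcU U x0. \<forall>g\<in>AcU U x0.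
          ulim U (\<lambda>n t. f n t + g n t) = (\<lambda>t. ulim U f t + ulim U g t)
        \<and> ulim U (\<lambda>n t. f n t * g n t) = (\<lambda>t. ulim U f t * ulim U g t)"
  proof (intro ballI conjI ext)
    fix f g t assume "f \<in> AcU U x0" "g \<in> AcU U x0"
    then have t1: "((\<lambda>n. f n t) \<longlongrightarrow> ulim U f t) U" and t2: "((\<lambda>n. g n t) \<longlongrightarrow> ulim U g t) U"
      using c1 by blast+
    show "ulim U (\<lambda>n t. f n t + g n t) t = ulim U f t + ulim U g t"
      by (rule ulim_eq[OF np]) (intro tendsto_add t1 t2)
    show "ulim U (\<lambda>n t. f n t * g n t) t = ulim U f t * ulim U g t"
      by (rule ulim_eq[OF np]) (intro tendsto_mult t1 t2)
  qed
  have c5: "\<forall>f\<in>AcU U x0. \<forall>c. ulim U (\<lambda>n t. c * f n t) = (\<lambda>t. c * ulim U f t)"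
  proof (intro ballI allI ext)
    fix f c t assume "f \<in> AcU U x0"
    then have t1: "((\<lambda>n. f n t) \<longlongrightarrow> ulim U f t) U" using c1 by blast
    show "ulim U (\<lambda>n t. c * f n t) t = c * ulim U f t"
      by (rule ulim_eq[OF np]) (intro tendsto_mult tendsto_const t1)
  qed
  have c6: "\<forall>f\<in>AcU U x0. ulim U (\<lambda>n t. cnj (f n t)) = (\<lambda>t. cnj (ulim U f t))"
  proof (intro ballI allI ext)
    fix f t assume "f \<in> AcU U x0"
    then have t1: "((\<lambda>n. f n t) \<longlongrightarrow> ulim U f t) U" using c1 by blast
    show "ulim U (\<lambda>n t. cnj (f n t)) t = cnj (ulim U f t)"
      by (rule ulim_eq[OF np]) (intro tendsto_cnj t1)
  qed
  have c7: "\<forall>h\<in>Cb. \<exists>f\<in>AcU U x0. ulim U f = h" using surj_part[OF np] by blast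
  have c8: "\<forall>f\<in>AcU U x0. ulim U f = (\<lambda>t. 0) \<longleftrightarrow> in_I U x0 f"
    using ker_fwd[OF np] ker_back[OF np] by blast
  have c9: "\<forall>a\<in>C0 x0. (\<lambda>n. a) \<in> AcU U x0 \<and> ulim U (\<lambda>n. a) = a"
    using const_part[OF np] by blast
  show ?thesis using c1 c2 c3 c4 c5 c6 c7 c8 c9 by blast
qed

end
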